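(* Let $W$ be a rational $\mathfrak{sl}(2)$-module. If $W$ is $\mathcal R$-simple, then $\mathrm{End}_{\mathfrak{sl}(2)}(W)=\mathbb{C}$ (the scalar multiples of the identity).
   Context: $\mathfrak{sl}(2)$ has basis $L_{-1}=f$, $L_0=-\tfrac12 h$, $L_1=-e$ for a Chevalley basis $e,f,h$. An $\mathfrak{sl}(2)$-module is a $\mathbb{C}[z]$-module via $z\cdot v=L_0 v$; it is rational if with this structure it is a finite-dimensional $\mathbb{C}(z)$-vector space. A rational module $W$ is $\mathcal R$-simple if $W\neq0$ and $W$ has no nonzero proper $\mathfrak{sl}(2)$-submodule that is a $\mathbb{C}(z)$-vector subspace (rational submodule). *)

theory Defs
  imports Main "HOL-Computational_Algebra.Polynomial" "HOL-Computational_Algebra.Fraction_Field"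
begin

text \<open>An sl(2)-module: a complex vector space (the whole type 'v, with scalar
  multiplication s) with three C-linear operators Lm = L_{-1} = f, L0 = L_0 = -h/2,
  Lp = L_1 = -e satisfying [L_m, L_n] = (m - n) L_{m+n}.\<close>

definition sl2_module ::
  "(complex \<Rightarrow> 'v::ab_group_add \<Rightarrow> 'v) \<Rightarrow> ('v \<Rightarrow> 'v) \<Rightarrow> ('v \<Rightarrow> 'v) \<Rightarrow> ('v \<Rightarrow> 'v) \<Rightarrow> bool" where
  "sl2_module s Lm L0 Lp \<longleftrightarrow>
     vector_space s \<and> Vector_Spaces.linear s s Lm \<and> Vector_Spaces.linear s s L0 \<and> Vector_Spaces.linear s s Lp \<and>
     (\<forall>v. Lp (Lm v) - Lm (Lp v) = s 2 (L0 v)) \<and>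
     (\<forall>v. L0 (Lp v) - Lp (L0 v) = s (-1) (Lp v)) \<and>
     (\<forall>v. L0 (Lm v) - Lm (L0 v) = Lm v)"

text \<open>Action of a polynomial p in C[z] via z \<cdot> v = L_0 v.\<close>

definition pact :: "(complex \<Rightarrow> 'v::ab_group_add \<Rightarrow> 'v) \<Rightarrow> ('v \<Rightarrow> 'v) \<Rightarrow> complex poly \<Rightarrow> 'v \<Rightarrow> 'v" where
  "pact s L0 p v = (\<Sum>i\<le>degree p. s (coeff p i) ((L0 ^^ i) v))"

text \<open>Action of a rational function p/q in C(z) (meaningful when nonzero polynomials act
  bijectively): (p/q) \<cdot> v = p(L_0) (q(L_0)^{-1} v).\<close>

definition ract :: "(complex \<Rightarrow> 'v::ab_group_add \<Rightarrow> 'v) \<Rightarrow> ('v \<Rightarrow> 'v) \<Rightarrow> complex poly fract \<Rightarrow> 'v \<Rightarrow> 'v" where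
  "ract s L0 r v =
     (let pq = (SOME pq. snd pq \<noteq> 0 \<and> r = Fract (fst pq) (snd pq))
      in pact s L0 (fst pq) (inv (pact s L0 (snd pq)) v))"

text \<open>Rational module: the C[z]-module structure makes W a C(z)-vector space (i.e. every
  nonzero polynomial acts invertibly), finite-dimensional over C(z).\<close>

definition rational_module ::
  "(complex \<Rightarrow> 'v::ab_group_add \<Rightarrow> 'v) \<Rightarrow> ('v \<Rightarrow> 'v) \<Rightarrow> ('v \<Rightarrow> 'v) \<Rightarrow> ('v \<Rightarrow> 'v) \<Rightarrow> bool" where
  "rational_module s Lm L0 Lp \<longleftrightarrow>
     sl2_module s Lm L0 Lp \<and>
     (\<forall>q. q \<noteq> 0 \<longrightarrow> bij (pact s L0 q)) \<and>
     (\<exists>B. finite B \<and> (\<forall>v. \<exists>c. v = (\<Sum>b\<in>B. ract s L0 (c b) b)))"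

definition rational_submodule ::
  "(complex \<Rightarrow> 'v::ab_group_add \<Rightarrow> 'v) \<Rightarrow> ('v \<Rightarrow> 'v) \<Rightarrow> ('v \<Rightarrow> 'v) \<Rightarrow> ('v \<Rightarrow> 'v) \<Rightarrow> 'v set \<Rightarrow> bool" where
  "rational_submodule s Lm L0 Lp U \<longleftrightarrow>
     0 \<in> U \<and> (\<forall>u\<in>U. \<forall>w\<in>U. u + w \<in> U) \<and>
     (\<forall>c. \<forall>u\<in>U. s c u \<in> U) \<and>
     (\<forall>r. \<forall>u\<in>U. ract s L0 r u \<in> U) \<and>
     (\<forall>u\<in>U. Lm u \<in> U \<and> L0 u \<in> U \<and> Lp u \<in> U)"

definition R_simple ::
  "(complex \<Rightarrow> 'v::ab_group_add \<Rightarrow> 'v) \<Rightarrow> ('v \<Rightarrow> 'v) \<Rightarrow> ('v \<Rightarrow> 'v) \<Rightarrow> ('v \<Rightarrow> 'v) \<Rightarrow> bool" where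
  "R_simple s Lm L0 Lp \<longleftrightarrow>
     rational_module s Lm L0 Lp \<and> (\<exists>v::'v. v \<noteq> 0) \<and>
     (\<forall>U. rational_submodule s Lm L0 Lp U \<longrightarrow> U = {0} \<or> U = UNIV)"

definition sl2_End ::
  "(complex \<Rightarrow> 'v::ab_group_add \<Rightarrow> 'v) \<Rightarrow> ('v \<Rightarrow> 'v) \<Rightarrow> ('v \<Rightarrow> 'v) \<Rightarrow> ('v \<Rightarrow> 'v) \<Rightarrow> ('v \<Rightarrow> 'v) set" where
  "sl2_End s Lm L0 Lp =
     {\<phi>. Vector_Spaces.linear s s \<phi> \<and> (\<forall>v. \<phi> (Lm v) = Lm (\<phi> v) \<and> \<phi> (L0 v) = L0 (\<phi> v) \<and> \<phi> (Lp v) = Lp (\<phi> v))}"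

end

theory Submission
  imports Defs "HOL-Computational_Algebra.Fundamental_Theorem_Algebra"
begin

locale cvs = vector_space s for s :: "complex \<Rightarrow> 'v::ab_group_add \<Rightarrow> 'v"
begin

definition lin :: "('v \<Rightarrow> 'v) \<Rightarrow> bool" where
  "lin A \<longleftrightarrow> (\<forall>x y. A (x + y) = A x + A y) \<and> (\<forall>c x. A (s c x) = s c (A x))"

lemma lin_linear: "lin A \<longleftrightarrow> Vector_Spaces.linear s s A"
  unfolding lin_def Vector_Spaces.linear_iff using vector_space_axioms by auto

lemma linD: assumes "lin A" shows "A (x + y) = A x + A y" "A (s c x) = s c (A x)"
  using assms unfolding lin_def by auto

lemma lin_zero: "lin A \<Longrightarrow> A 0 = 0"
  by (metis linD(2) scale_zero_left)

lemma lin_neg: "lin A \<Longrightarrow> A (- x) = - A x"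
  by (metis add.right_inverse add_eq_0_iff lin_zero linD(1))

lemma lin_diff: "lin A \<Longrightarrow> A (x - y) = A x - A y"
  by (metis diff_conv_add_uminus lin_neg linD(1))

lemma lin_sum: assumes "lin A" shows "A (sum f S) = (\<Sum>i\<in>S. A (f i))"
proof (cases "finite S")
  case True thus ?thesis by (induction S rule: finite_induct) (auto simp: lin_zero[OF assms] linD[OF assms])
next
  case False thus ?thesis using lin_zero[OF assms] by simp
qed

lemma lin_comp: "lin A \<Longrightarrow> lin B \<Longrightarrow> lin (A \<circ> B)"
  unfolding lin_def by auto

lemma lin_id: "lin id" unfolding lin_def by auto

lemma lin_funpow: "lin A \<Longrightarrow> lin (A ^^ n)"
  by (induction n) (auto simp: lin_id lin_comp)

lemma lin_scale: "lin (s c)"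
  unfolding lin_def by (simp add: scale_right_distrib scale_left_commute)

lemma lin_sub: "lin A \<Longrightarrow> lin B \<Longrightarrow> lin (\<lambda>x. A x - B x)"
  unfolding lin_def by (auto simp: algebra_simps scale_right_diff_distrib)

lemma pact_bound:
  assumes "degree p \<le> n"
  shows "pact s A p v = (\<Sum>i\<le>n. s (coeff p i) ((A ^^ i) v))"
proof -
  have "(\<Sum>i\<le>n. s (coeff p i) ((A ^^ i) v)) = (\<Sum>i\<le>degree p. s (coeff p i) ((A ^^ i) v))"
    by (rule sum.mono_neutral_right) (use assms in \<open>auto simp: coeff_eq_0 not_le\<close>)
  thus ?thesis unfolding pact_def by simp
qed

lemma pact_pCons:
  assumes "lin A"
  shows "pact s A (pCons a p) v = s a v + A (pact s A p v)"
proof -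
  have "pact s A (pCons a p) v = (\<Sum>i\<le>Suc (degree p). s (coeff (pCons a p) i) ((A ^^ i) v))"
    by (rule pact_bound) (simp add: degree_pCons_le)
  also have "\<dots> = s a v + (\<Sum>i\<le>degree p. s (coeff p i) ((A ^^ Suc i) v))"
    by (subst sum.atMost_Suc_shift) simp
  also have "(\<Sum>i\<le>degree p. s (coeff p i) ((A ^^ Suc i) v)) = A (pact s A p v)"
    unfolding pact_def by (simp add: lin_sum[OF assms] linD[OF assms])
  finally show ?thesis .
qed

lemma pact_0[simp]: "pact s A 0 v = 0"
  unfolding pact_def by simp

lemma pact_const: "pact s A [:a:] v = s a v"
  unfolding pact_def by simp

lemma pact_one[simp]: "pact s A 1 v = v"
  unfolding one_pCons pact_const by simp

lemma pact_add: "pact s A (p + q) v = pact s A p v + pact s A q v"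
proof -
  let ?n = "max (degree p) (degree q)"
  have "pact s A (p + q) v = (\<Sum>i\<le>?n. s (coeff (p+q) i) ((A ^^ i) v))"
    by (rule pact_bound) (simp add: degree_add_le)
  also have "\<dots> = (\<Sum>i\<le>?n. s (coeff p i) ((A ^^ i) v)) + (\<Sum>i\<le>?n. s (coeff q i) ((A ^^ i) v))"
    by (simp add: scale_left_distrib sum.distrib)
  also have "\<dots> = pact s A p v + pact s A q v"
    using pact_bound[of p ?n A v] pact_bound[of q ?n A v] by simp
  finally show ?thesis .
qed

lemma pact_smult: "pact s A (smult a p) v = s a (pact s A p v)"
proof -
  have "pact s A (smult a p) v = (\<Sum>i\<le>degree p. s (coeff (smult a p) i) ((A ^^ i) v))"
    by (rule pact_bound) simp
  also have "\<dots> = s a (pact s A p v)"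
    unfolding pact_def by (simp add: scale_sum_right)
  finally show ?thesis .
qed

lemma pact_minus: "pact s A (- p) v = - pact s A p v"
  by (metis add.right_inverse add_eq_0_iff pact_0 pact_add)

lemma pact_diff: "pact s A (p - q) v = pact s A p v - pact s A q v"
  by (metis diff_conv_add_uminus pact_add pact_minus)

lemma pact_mult:
  assumes "lin A"
  shows "pact s A (p * q) v = pact s A p (pact s A q v)"
proof (induction p)
  case 0 thus ?case by simp
next
  case (pCons a p)
  have "pact s A (pCons a p * q) v = s a (pact s A q v) + pact s A (pCons 0 (p * q)) v"
    by (simp add: pact_add pact_smult)
  also have "pact s A (pCons 0 (p * q)) v = A (pact s A p (pact s A q v))"
    using pCons by (simp add: pact_pCons[OF assms])
  finally show ?case by (simp add: pact_pCons[OF assms])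
qed

lemma pact_lin:
  assumes "lin A" shows "lin (pact s A p)"
proof (induction p)
  case 0 thus ?case unfolding lin_def by simp
next
  case (pCons a p)
  show ?case unfolding lin_def
    using linD[OF pCons(2)] linD[OF assms] lin_scale[of a, unfolded lin_def]
    by (simp add: pact_pCons[OF assms] algebra_simps scale_left_commute)
qed

lemma pact_commute:
  assumes "lin A" "lin T" "\<And>x. T (A x) = A (T x)"
  shows "T (pact s A p v) = pact s A p (T v)"
proof (induction p)
  case 0 thus ?case using lin_zero[OF assms(2)] by simp
next
  case (pCons a p)
  thus ?case using assms by (simp add: pact_pCons linD)
qed

lemma pact_pact_commute:
  assumes "lin A"
  shows "pact s A p (pact s A q v) = pact s A q (pact s A p v)"
  by (metis assms mult.commute pact_mult)

lemma inv_commute: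
  assumes "bij Q" "\<And>x. T (Q x) = Q (T x)"
  shows "T (inv Q x) = inv Q (T x)"
  by (metis assms bij_inv_eq_iff)

end

locale rsl2 =
  fixes s :: "complex \<Rightarrow> 'v::ab_group_add \<Rightarrow> 'v" and Lm L0 Lp :: "'v \<Rightarrow> 'v"
  assumes rm: "rational_module s Lm L0 Lp" and rsimp: "R_simple s Lm L0 Lp"
begin

lemma sl2: "sl2_module s Lm L0 Lp" using rm unfolding rational_module_def by auto

sublocale cvs s using sl2 unfolding sl2_module_def cvs_def by auto

abbreviation pa where "pa \<equiv> pact s L0"
abbreviation ra where "ra \<equiv> ract s L0"

lemma linLm: "lin Lm" and linL0: "lin L0" and linLp: "lin Lp"
  using sl2 unfolding sl2_module_def lin_linear by auto

lemma comm1: "Lp (Lm v) - Lm (Lp v) = s 2 (L0 v)"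
  and comm2: "L0 (Lp v) - Lp (L0 v) = s (-1) (Lp v)"
  and comm3: "L0 (Lm v) - Lm (L0 v) = Lm v"
  using sl2 unfolding sl2_module_def by auto

lemma bijQ: "q \<noteq> 0 \<Longrightarrow> bij (pa q)"
  using rm unfolding rational_module_def by auto

lemma LmL0: "Lm (L0 v) = L0 (Lm v) - Lm v"
  using comm3[of v] by (simp add: algebra_simps)

lemma LpL0: "Lp (L0 v) = L0 (Lp v) + Lp v"
  using comm2[of v] by (simp add: algebra_simps)

lemma LmLp: "Lm (Lp v) = Lp (Lm v) - s 2 (L0 v)"
  using comm1[of v] by (simp add: algebra_simps)

lemma pa_lin: "lin (pa p)" by (rule pact_lin[OF linL0])

lemma pa_mult: "pa (p * q) v = pa p (pa q v)" by (rule pact_mult[OF linL0])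

lemma pa_lin1: "pa [:c, 1:] y = s c y + L0 y"
  by (simp add: pact_pCons[OF linL0] pact_const)

lemma C_Lm: "Lm (pa (p \<circ>\<^sub>p [:c, 1:]) v) = pa (p \<circ>\<^sub>p [:c - 1, 1:]) (Lm v)"
proof (induction p)
  case 0 thus ?case using lin_zero[OF linLm] by simp
next
  case (pCons a p)
  define Y where "Y = pa (p \<circ>\<^sub>p [:c, 1:]) v"
  define Z where "Z = pa (p \<circ>\<^sub>p [:c - 1, 1:]) (Lm v)"
  have IH: "Lm Y = Z" using pCons(2) unfolding Y_def Z_def .
  have "pa (pCons a p \<circ>\<^sub>p [:c, 1:]) v = s a v + (s c Y + L0 Y)"
    by (simp add: pcompose_pCons pact_add pact_const pact_smult pact_pCons[OF linL0] Y_def)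
  hence "Lm (pa (pCons a p \<circ>\<^sub>p [:c, 1:]) v) = s a (Lm v) + (s c Z + (L0 Z - Z))"
    using linD[OF linLm] IH by (simp add: LmL0)
  also have "pa (pCons a p \<circ>\<^sub>p [:c - 1, 1:]) (Lm v) = s a (Lm v) + (s (c - 1) Z + L0 Z)"
    by (simp add: pcompose_pCons pact_add pact_const pact_smult pact_pCons[OF linL0] Z_def)
  hence "s a (Lm v) + (s c Z + (L0 Z - Z)) = pa (pCons a p \<circ>\<^sub>p [:c - 1, 1:]) (Lm v)"
    by (simp add: scale_left_diff_distrib algebra_simps)
  finally show ?case .
qed

lemma C_Lp: "Lp (pa (p \<circ>\<^sub>p [:c, 1:]) v) = pa (p \<circ>\<^sub>p [:c + 1, 1:]) (Lp v)"
proof (induction p)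
  case 0 thus ?case using lin_zero[OF linLp] by simp
next
  case (pCons a p)
  define Y where "Y = pa (p \<circ>\<^sub>p [:c, 1:]) v"
  define Z where "Z = pa (p \<circ>\<^sub>p [:c + 1, 1:]) (Lp v)"
  have IH: "Lp Y = Z" using pCons(2) unfolding Y_def Z_def .
  have "pa (pCons a p \<circ>\<^sub>p [:c, 1:]) v = s a v + (s c Y + L0 Y)"
    by (simp add: pcompose_pCons pact_add pact_const pact_smult pact_pCons[OF linL0] Y_def)
  hence "Lp (pa (pCons a p \<circ>\<^sub>p [:c, 1:]) v) = s a (Lp v) + (s c Z + (L0 Z + Z))"
    using linD[OF linLp] IH by (simp add: LpL0)
  also have "pa (pCons a p \<circ>\<^sub>p [:c + 1, 1:]) (Lp v) = s a (Lp v) + (s (c + 1) Z + L0 Z)"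
    by (simp add: pcompose_pCons pact_add pact_const pact_smult pact_pCons[OF linL0] Z_def)
  hence "s a (Lp v) + (s c Z + (L0 Z + Z)) = pa (pCons a p \<circ>\<^sub>p [:c + 1, 1:]) (Lp v)"
    by (simp add: scale_left_distrib algebra_simps)
  finally show ?case .
qed

lemma Lm_pa: "Lm (pa p v) = pa (p \<circ>\<^sub>p [:-1, 1:]) (Lm v)"
  using C_Lm[of p 0 v] by simp

lemma Lm_pa': "Lm (pa (p \<circ>\<^sub>p [:1, 1:]) v) = pa p (Lm v)"
  using C_Lm[of p 1 v] by simp

lemma Lpn_pa: "(Lp ^^ j) (pa p v) = pa (p \<circ>\<^sub>p [:of_nat j, 1:]) ((Lp ^^ j) v)"
proof (induction j)
  case 0 thus ?case by simp
next
  case (Suc j)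
  thus ?case using C_Lp[of p "of_nat j" "(Lp ^^ j) v"] by (simp add: add.commute)
qed

end

context rsl2
begin

lemma Q_inv: "q \<noteq> 0 \<Longrightarrow> pa q (pa p (inv (pa q) v)) = pa p v"
  by (metis bijQ bij_is_surj pact_pact_commute[OF linL0] surj_f_inv_f)

lemma Q_inj: "q \<noteq> 0 \<Longrightarrow> pa q x = pa q y \<Longrightarrow> x = y"
  by (metis bijQ bij_is_inj injD)

lemma R1: assumes "q \<noteq> 0" shows "ra (Fract p q) v = pa p (inv (pa q) v)"
proof -
  define pq where "pq = (SOME pq. snd pq \<noteq> 0 \<and> Fract p q = Fract (fst pq) (snd pq))"
  have "\<exists>pq. snd pq \<noteq> 0 \<and> Fract p q = Fract (fst pq) (snd pq)"
    using assms by (intro exI[of _ "(p, q)"]) auto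
  hence pq: "snd pq \<noteq> 0" "Fract p q = Fract (fst pq) (snd pq)"
    unfolding pq_def by (metis (mono_tags, lifting) someI_ex)+
  obtain p' q' where pq': "pq = (p', q')" by fastforce
  have q': "q' \<noteq> 0" and eq: "p * q' = p' * q" using pq assms by (auto simp: pq' eq_fract)
  have "ra (Fract p q) v = pa p' (inv (pa q') v)"
    unfolding ract_def pq_def[symmetric] by (simp add: pq')
  moreover have "pa (q * q') (pa p' (inv (pa q') v)) = pa (q * q') (pa p (inv (pa q) v))"
  proof -
    have "pa (q * q') (pa p' (inv (pa q') v)) = pa q (pa p' v)"
      using Q_inv[OF q'] by (simp add: pa_mult)
    also have "\<dots> = pa (q * p') v" by (simp add: pa_mult)
    also have "\<dots> = pa (q' * p) v" using eq by (simp add: mult_ac)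
    also have "\<dots> = pa q' (pa q (pa p (inv (pa q) v)))"
      using Q_inv[OF assms] by (simp add: pa_mult)
    also have "\<dots> = pa (q * q') (pa p (inv (pa q) v))"
      by (subst mult.commute) (rule pa_mult[symmetric])
    finally show ?thesis .
  qed
  ultimately show ?thesis using Q_inj[of "q * q'"] assms q' by simp
qed

lemma RE: "q \<noteq> 0 \<Longrightarrow> pa q (ra (Fract p q) x) = pa p x"
  by (simp add: R1 Q_inv)

lemma RU: "q \<noteq> 0 \<Longrightarrow> pa q y = pa p x \<Longrightarrow> y = ra (Fract p q) x"
  using RE Q_inj by metis

lemma pa_mult': "pa (q * q') y = pa q' (pa q y)"
  by (subst mult.commute) (rule pa_mult)

lemma vsF: "vector_space ra"
proof (unfold_locales)
  fix a :: "complex poly fract" and x y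
  obtain p q where a: "a = Fract p q" "q \<noteq> 0" by (cases a)
  have "pa q (ra a x + ra a y) = pa q (ra a x) + pa q (ra a y)" by (rule linD(1)[OF pa_lin])
  also have "\<dots> = pa p x + pa p y" using a RE by simp
  also have "\<dots> = pa p (x + y)" by (rule linD(1)[OF pa_lin, symmetric])
  finally show "ra a (x + y) = ra a x + ra a y" using RU a by metis
next
  fix a b :: "complex poly fract" and x
  obtain p q where a: "a = Fract p q" "q \<noteq> 0" by (cases a)
  obtain p' q' where b: "b = Fract p' q'" "q' \<noteq> 0" by (cases b)
  have e1: "pa (q * q') (ra a x) = pa (q' * p) x"
    using a RE[of q p x] by (simp add: pa_mult'[of q q'] pa_mult[of q' p])
  have e2: "pa (q * q') (ra b x) = pa (q * p') x"
    using b RE[of q' p' x] by (simp add: pa_mult)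
  have "pa (q * q') (ra a x + ra b x) = pa (q * q') (ra a x) + pa (q * q') (ra b x)"
    by (rule linD(1)[OF pa_lin])
  also have "\<dots> = pa (p * q' + p' * q) x" using e1 e2 by (simp add: pact_add mult.commute)
  finally have "ra a x + ra b x = ra (Fract (p * q' + p' * q) (q * q')) x"
    using RU a b by simp
  thus "ra (a + b) x = ra a x + ra b x" using a b by simp
  have "pa (q * q') (ra a (ra b x)) = pa q' (pa p (ra b x))"
    using a RE[of q p] by (simp add: pa_mult')
  also have "\<dots> = pa p (pa q' (ra b x))" by (rule pact_pact_commute[OF linL0])
  also have "\<dots> = pa (p * p') x" using b RE[of q' p' x] by (simp add: pa_mult)
  finally have "ra a (ra b x) = ra (Fract (p * p') (q * q')) x"
    using RU a b by simp
  thus "ra a (ra b x) = ra (a * b) x" using a b by simp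
next
  fix x
  show "ra 1 x = x" using RU[of 1 x 1 x] by (simp add: One_fract_def)
qed

sublocale F: vector_space ra by (rule vsF)

lemma ra_commute:
  assumes "lin T" "\<And>x. T (L0 x) = L0 (T x)"
  shows "T (ra a x) = ra a (T x)"
proof -
  obtain p q where a: "a = Fract p q" "q \<noteq> 0" by (cases a)
  have "pa q (T (ra a x)) = pa p (T x)"
    using pact_commute[OF linL0 assms] RE a by metis
  thus ?thesis using RU a by simp
qed

lemma clear_den:
  fixes n :: nat
  assumes "(\<Sum>k\<le>n. ra (u k) (g k)) = 0"
  shows "\<exists>c. (\<forall>k\<le>n. u k \<noteq> 0 \<longrightarrow> c k \<noteq> 0) \<and> (\<Sum>k\<le>n. pa (c k) (g k)) = 0"
proof -
  have "\<forall>k. \<exists>pq. snd pq \<noteq> 0 \<and> u k = Fract (fst pq) (snd pq)"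
    by (metis Fract_cases fst_conv snd_conv)
  then obtain f where f: "\<And>k. snd (f k) \<noteq> 0 \<and> u k = Fract (fst (f k)) (snd (f k))"
    by metis
  define p where "p k = fst (f k)" for k
  define q where "q k = snd (f k)" for k
  have pq: "q k \<noteq> 0" "u k = Fract (p k) (q k)" for k using f p_def q_def by auto
  define R where "R k = (\<Prod>j\<in>{..n} - {k}. q j)" for k
  define c where "c k = p k * R k" for k
  have Rnz: "R k \<noteq> 0" for k unfolding R_def using pq(1) prod_zero_iff[of "{..n} - {k}" q] by auto
  have "pa (\<Prod>j\<le>n. q j) (\<Sum>k\<le>n. ra (u k) (g k)) = 0"
    using assms lin_zero[OF pa_lin] by simp
  moreover have "pa (\<Prod>j\<le>n. q j) (\<Sum>k\<le>n. ra (u k) (g k)) = (\<Sum>k\<le>n. pa (c k) (g k))"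
  proof -
    have "pa (\<Prod>j\<le>n. q j) (ra (u k) (g k)) = pa (c k) (g k)" if "k \<le> n" for k
    proof -
      have "(\<Prod>j\<le>n. q j) = R k * q k"
        unfolding R_def using that by (simp add: prod.remove mult.commute)
      hence "pa (\<Prod>j\<le>n. q j) (ra (u k) (g k)) = pa (R k) (pa (p k) (g k))"
        using RE[OF pq(1)] pq(2) by (simp add: pa_mult)
      thus ?thesis by (simp add: c_def pa_mult pact_pact_commute[OF linL0])
    qed
    thus ?thesis by (simp add: lin_sum[OF pa_lin])
  qed
  moreover have "u k \<noteq> 0 \<Longrightarrow> c k \<noteq> 0" for k
    using Rnz[of k] pq[of k] by (auto simp: c_def eq_fract(3) Zero_fract_def)
  ultimately show ?thesis by auto
qed

lemma FD: "\<exists>n. \<forall>g :: nat \<Rightarrow> 'v. \<exists>c. (\<exists>k\<le>n. c k \<noteq> 0) \<and> (\<Sum>k\<le>n. pa (c k) (g k)) = 0"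
proof -
  obtain B where B: "finite B" "\<And>v. \<exists>c. v = (\<Sum>b\<in>B. ra (c b) b)"
    using rm unfolding rational_module_def by auto
  have spanB: "F.span B = UNIV"
  proof -
    have "v \<in> F.span B" for v
    proof -
      obtain c where "v = (\<Sum>b\<in>B. ra (c b) b)" using B(2)[of v] by blast
      moreover have "(\<Sum>b\<in>B. ra (c b) b) \<in> F.span B"
        by (rule F.span_sum, rule F.span_scale, rule F.span_base)
      ultimately show ?thesis by simp
    qed
    thus ?thesis by auto
  qed
  define n where "n = card B"
  have "\<exists>c. (\<exists>k\<le>n. c k \<noteq> 0) \<and> (\<Sum>k\<le>n. pa (c k) (g k)) = 0" for g :: "nat \<Rightarrow> 'v"
  proof (cases "inj_on g {..n}")
    case True
    define A where "A = g ` {..n}"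
    have cardA: "card A = Suc n" unfolding A_def using True by (simp add: card_image)
    have "\<not> F.independent A"
    proof
      assume "F.independent A"
      from F.independent_span_bound[OF B(1) this] have "card A \<le> card B"
        using spanB by auto
      thus False using cardA n_def by simp
    qed
    then obtain S u where S: "S \<subseteq> A" "finite S" "(\<Sum>v\<in>S. ra (u v) v) = 0" "\<exists>v\<in>S. u v \<noteq> 0"
      unfolding F.independent_explicit_finite_subsets by blast
    define u' where "u' k = (if g k \<in> S then u (g k) else 0)" for k
    have "(\<Sum>k\<le>n. ra (u' k) (g k)) = (\<Sum>v\<in>A. ra (if v \<in> S then u v else 0) v)"
      unfolding A_def using True by (simp add: sum.reindex u'_def)
    also have "\<dots> = (\<Sum>v\<in>A. if v \<in> S then ra (u v) v else 0)"
      by (intro sum.cong) auto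
    also have "\<dots> = (\<Sum>v\<in>A \<inter> S. ra (u v) v)"
      by (rule sum.inter_restrict[symmetric]) (simp add: A_def)
    also have "A \<inter> S = S" using S by auto
    finally have sum0: "(\<Sum>k\<le>n. ra (u' k) (g k)) = 0" using S by simp
    obtain v0 where "v0 \<in> S" "u v0 \<noteq> 0" using S by auto
    then obtain k0 where k0: "k0 \<le> n" "u' k0 \<noteq> 0"
      using S(1) unfolding A_def u'_def by auto
    from clear_den[OF sum0] obtain c where
      "\<forall>k\<le>n. u' k \<noteq> 0 \<longrightarrow> c k \<noteq> 0" "(\<Sum>k\<le>n. pa (c k) (g k)) = 0" by blast
    thus ?thesis using k0 by blast
  next
    case False
    then obtain i j where ij: "i \<le> n" "j \<le> n" "i \<noteq> j" "g i = g j"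
      unfolding inj_on_def by auto
    define c where "c k = (if k = i then 1 else if k = j then -1 else (0::complex poly))" for k
    have "pa (c k) (g k) = (if k = i then g k else 0) - (if k = j then g k else 0)" for k
      using ij(3) by (auto simp: c_def pact_minus)
    hence "(\<Sum>k\<le>n. pa (c k) (g k)) = g i - g j"
      using ij by (simp add: sum_subtractf)
    thus ?thesis using ij by (intro exI[of _ c]) (auto simp: c_def)
  qed
  thus ?thesis by blast
qed

end

context rsl2
begin

lemma pa_lin2: "pa [:a, b:] w = s a w + s b (L0 w)"
  by (simp add: pact_pCons[OF linL0] pact_const linD[OF linL0])

lemma L0Lpn: "L0 ((Lp ^^ m) u) = (Lp ^^ m) (L0 u - s (of_nat m) u)"
proof (induction m)
  case 0 thus ?case by simp
next
  case (Suc m)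
  have "L0 ((Lp ^^ Suc m) u) = Lp (L0 ((Lp ^^ m) u)) - Lp ((Lp ^^ m) u)"
    using LpL0[of "(Lp ^^ m) u"] by (simp add: algebra_simps)
  also have "\<dots> = (Lp ^^ Suc m) (L0 u - s (of_nat m) u - u)"
    using Suc lin_diff[OF lin_funpow[OF linLp, of "Suc m"]] by simp
  also have "L0 u - s (of_nat m) u - u = L0 u - s (of_nat (Suc m)) u"
    by (simp add: scale_left_distrib algebra_simps)
  finally show ?case .
qed

definition ee :: "nat \<Rightarrow> complex poly" where
  "ee k = [: of_nat ((k + 1) * k), - 2 * of_nat (k + 1) :]"

lemma LmLpn:
  assumes "Lm w = 0"
  shows "Lm ((Lp ^^ Suc k) w) = (Lp ^^ k) (pa (ee k) w)"
proof (induction k)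
  case 0
  have "Lm (Lp w) = - s 2 (L0 w)" using LmLp[of w] assms lin_zero[OF linLp] by simp
  thus ?case by (simp add: ee_def pa_lin2)
next
  case (Suc k)
  let ?P = "Lp ^^ Suc k"
  have linP: "lin ?P" by (rule lin_funpow[OF linLp])
  have "Lm ((Lp ^^ Suc (Suc k)) w) = Lp (Lm (?P w)) - s 2 (L0 (?P w))"
    using LmLp[of "?P w"] by simp
  also have "\<dots> = ?P (pa (ee k) w) - ?P (s 2 (L0 w - s (of_nat (Suc k)) w))"
    using Suc L0Lpn[of "Suc k" w] linD[OF linP] by simp
  also have "\<dots> = ?P (pa (ee k) w - s 2 (L0 w - s (of_nat (Suc k)) w))"
    using lin_diff[OF linP] by simp
  also have "pa (ee k) w - s 2 (L0 w - s (of_nat (Suc k)) w) = pa (ee (Suc k)) w"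
  proof -
    have "pa (ee k) w - s 2 (L0 w - s (of_nat (Suc k)) w) =
      s (of_nat ((k + 1) * k)) w + s (2 * of_nat (Suc k)) w + (s (- 2 * of_nat (k + 1)) (L0 w) - s 2 (L0 w))"
      by (simp add: ee_def pa_lin2 scale_right_diff_distrib algebra_simps)
    also have "\<dots> = s (of_nat ((k + 1) * k) + 2 * of_nat (Suc k)) w + s (- 2 * of_nat (k + 1) - 2) (L0 w)"
      by (simp only: scale_left_distrib scale_left_diff_distrib)
    also have "\<dots> = pa (ee (Suc k)) w"
    proof -
      have n1: "(k + 1) * k + 2 * Suc k = (Suc k + 1) * Suc k" by simp
      have A: "of_nat ((k + 1) * k) + 2 * of_nat (Suc k) = (of_nat ((Suc k + 1) * Suc k) :: complex)"
        by (metis n1 of_nat_add of_nat_mult of_nat_numeral)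
      have B: "- 2 * of_nat (k + 1) - 2 = (- 2 * of_nat (Suc k + 1) :: complex)"
        by (simp add: algebra_simps)
      show ?thesis unfolding A B by (simp add: ee_def pa_lin2)
    qed
    finally show ?thesis .
  qed
  finally show ?case by simp
qed

lemma pa_zero_vec: "pa p 0 = 0" by (rule lin_zero[OF pa_lin])

lemma pa_kill: "pa p v = 0 \<Longrightarrow> v \<noteq> 0 \<Longrightarrow> p = 0"
  using Q_inj[of p v 0] pa_zero_vec by auto

lemma ee_nz: "ee j \<circ>\<^sub>p [:of_nat j, 1:] \<noteq> 0"
proof -
  have h: "(of_nat (Suc j) :: complex) \<noteq> 0" by (simp only: of_nat_eq_0_iff)
  have "of_nat j \<noteq> (-1 :: complex)"
  proof
    assume "of_nat j = (-1 :: complex)"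
    hence "(of_nat (Suc j) :: complex) = 0" by (simp only: of_nat_Suc) simp
    thus False using h by simp
  qed
  hence "coeff (ee j) 1 \<noteq> 0" by (simp add: ee_def)
  hence "ee j \<noteq> 0" by auto
  thus ?thesis by (simp add: pcompose_eq_0_iff)
qed

lemma claim:
  assumes "Lm v = 0" "v \<noteq> 0"
  shows "(\<Sum>k\<le>N. pa (c k) ((Lp ^^ k) v)) = 0 \<Longrightarrow> k \<le> N \<Longrightarrow> c k = 0"
proof (induction N arbitrary: c k)
  case 0 thus ?case using pa_kill assms(2) by simp
next
  case (Suc N)
  define d where "d j = (c (Suc j) \<circ>\<^sub>p [:-1, 1:]) * (ee j \<circ>\<^sub>p [:of_nat j, 1:])" for j
  have sum0: "(\<Sum>k\<le>Suc N. pa (c k) ((Lp ^^ k) v)) = 0" by (rule Suc.prems(1))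
  have "Lm (\<Sum>k\<le>Suc N. pa (c k) ((Lp ^^ k) v)) = (\<Sum>k\<le>Suc N. pa (c k \<circ>\<^sub>p [:-1, 1:]) (Lm ((Lp ^^ k) v)))"
    unfolding lin_sum[OF linLm] by (simp only: Lm_pa)
  also have "\<dots> = (\<Sum>j\<le>N. pa (d j) ((Lp ^^ j) v))"
  proof -
    have "pa (c (Suc j) \<circ>\<^sub>p [:-1, 1:]) (Lm ((Lp ^^ Suc j) v)) = pa (d j) ((Lp ^^ j) v)" for j
      using LmLpn[OF assms(1), of j] Lpn_pa[of j "ee j" v] by (simp add: d_def pa_mult)
    thus ?thesis by (subst sum.atMost_Suc_shift) (simp add: assms(1) pa_zero_vec)
  qed
  finally have "(\<Sum>j\<le>N. pa (d j) ((Lp ^^ j) v)) = 0"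
    using sum0 lin_zero[OF linLm] by simp
  hence "d j = 0" if "j \<le> N" for j using Suc.IH that by blast
  hence cS: "c (Suc j) = 0" if "j \<le> N" for j
    using that ee_nz[of j] by (auto simp: d_def pcompose_eq_0_iff)
  have "pa (c 0) v = 0"
    using sum0 cS by (subst (asm) sum.atMost_Suc_shift) simp
  hence c0: "c 0 = 0" using pa_kill assms(2) by simp
  show ?case
  proof (cases k)
    case 0 thus ?thesis using c0 by simp
  next
    case (Suc j) thus ?thesis using cS Suc.prems(2) by simp
  qed
qed

lemma Lm_inj: "Lm v = 0 \<Longrightarrow> v = 0"
proof (rule ccontr)
  assume a: "Lm v = 0" "v \<noteq> 0"
  obtain n where n: "\<And>g :: nat \<Rightarrow> 'v. \<exists>c. (\<exists>k\<le>n. c k \<noteq> 0) \<and> (\<Sum>k\<le>n. pa (c k) (g k)) = 0"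
    using FD by blast
  from n[of "\<lambda>k. (Lp ^^ k) v"] obtain c k where "k \<le> n" "c k \<noteq> 0"
    "(\<Sum>k\<le>n. pa (c k) ((Lp ^^ k) v)) = 0" by blast
  thus False using claim[OF a] by blast
qed

end

lemma delta_deg:
  fixes c :: "complex poly"
  assumes "degree c > 0"
  shows "c \<circ>\<^sub>p [:1, 1:] - c = 0 \<or> degree (c \<circ>\<^sub>p [:1, 1:] - c) < degree c"
proof (cases "c \<circ>\<^sub>p [:1, 1:] - c = 0")
  case True thus ?thesis by simp
next
  case False
  hence nz: "c \<circ>\<^sub>p [:1, 1:] - c \<noteq> 0" .
  let ?d = "degree c"
  have dg: "degree (c \<circ>\<^sub>p [:1, 1:]) = ?d" by (simp add: degree_pcompose)
  have lc: "lead_coeff (c \<circ>\<^sub>p [:1, 1:]) = lead_coeff c" by (simp add: lead_coeff_comp)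
  have le: "degree (c \<circ>\<^sub>p [:1, 1:] - c) \<le> ?d" using degree_diff_le[of "c \<circ>\<^sub>p [:1, 1:]" ?d c] dg by simp
  have "coeff (c \<circ>\<^sub>p [:1, 1:] - c) ?d = 0" using lc dg by simp
  hence "degree (c \<circ>\<^sub>p [:1, 1:] - c) \<noteq> ?d" using nz by (metis leading_coeff_0_iff)
  thus ?thesis using le by simp
qed

lemma periodic_const:
  fixes c :: "complex poly"
  assumes "c \<circ>\<^sub>p [:1, 1:] = c"
  shows "degree c = 0"
proof -
  have step: "poly c (x + 1) = poly c x" for x
    using arg_cong[OF assms, of "\<lambda>p. poly p x"] by (simp add: poly_pcompose add.commute)
  have k: "poly c (of_nat k) = poly c 0" for k
    by (induction k) (auto simp: step of_nat_Suc add.commute[of 1])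
  define h where "h = c - [:poly c 0:]"
  have "range (of_nat :: nat \<Rightarrow> complex) \<subseteq> {x. poly h x = 0}"
    using k by (auto simp: h_def)
  moreover have "infinite (range (of_nat :: nat \<Rightarrow> complex))"
    using inj_of_nat finite_imageD by blast
  ultimately have "infinite {x. poly h x = 0}" using finite_subset by blast
  hence "h = 0" using poly_roots_finite by blast
  hence "c = [:poly c 0:]" by (simp add: h_def)
  thus ?thesis by (metis degree_pCons_0)
qed

lemma funpow_commute:
  assumes "\<And>x. f (g x) = g (f x)"
  shows "f ((g ^^ n) x) = (g ^^ n) (f x)"
  by (induction n) (simp_all add: assms)

locale rphi = rsl2 s Lm L0 Lp for s :: "complex \<Rightarrow> 'v::ab_group_add \<Rightarrow> 'v" and Lm L0 Lp +
  fixes \<phi> :: "'v \<Rightarrow> 'v"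
  assumes phi: "\<phi> \<in> sl2_End s Lm L0 Lp"
begin

lemma linphi: "lin \<phi>" and phiLm: "\<phi> (Lm v) = Lm (\<phi> v)" and phiL0: "\<phi> (L0 v) = L0 (\<phi> v)"
  and phiLp: "\<phi> (Lp v) = Lp (\<phi> v)"
  using phi unfolding sl2_End_def lin_linear by auto

definition evb :: "complex poly poly \<Rightarrow> 'v \<Rightarrow> 'v" where
  "evb P w = (\<Sum>i\<le>degree P. pa (coeff P i) ((\<phi> ^^ i) w))"

lemma E_bound:
  assumes "degree P \<le> n"
  shows "evb P w = (\<Sum>i\<le>n. pa (coeff P i) ((\<phi> ^^ i) w))"
proof -
  have "(\<Sum>i\<le>n. pa (coeff P i) ((\<phi> ^^ i) w)) = (\<Sum>i\<le>degree P. pa (coeff P i) ((\<phi> ^^ i) w))"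
    by (rule sum.mono_neutral_right) (use assms in \<open>auto simp: coeff_eq_0 not_le\<close>)
  thus ?thesis unfolding evb_def by simp
qed

lemma E_0[simp]: "evb 0 w = 0" unfolding evb_def by simp

lemma E_pCons: "evb (pCons a P) w = pa a w + evb P (\<phi> w)"
proof -
  have "evb (pCons a P) w = (\<Sum>i\<le>Suc (degree P). pa (coeff (pCons a P) i) ((\<phi> ^^ i) w))"
    by (rule E_bound) (simp add: degree_pCons_le)
  also have "\<dots> = pa a w + (\<Sum>i\<le>degree P. pa (coeff P i) ((\<phi> ^^ Suc i) w))"
    by (subst sum.atMost_Suc_shift) simp
  also have "(\<Sum>i\<le>degree P. pa (coeff P i) ((\<phi> ^^ Suc i) w)) = evb P (\<phi> w)"
    unfolding evb_def by (simp add: funpow_swap1)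
  finally show ?thesis .
qed

lemma E_add: "evb (P + Q) w = evb P w + evb Q w"
proof -
  let ?n = "max (degree P) (degree Q)"
  have "evb (P + Q) w = (\<Sum>i\<le>?n. pa (coeff (P + Q) i) ((\<phi> ^^ i) w))"
    by (rule E_bound) (simp add: degree_add_le)
  also have "\<dots> = (\<Sum>i\<le>?n. pa (coeff P i) ((\<phi> ^^ i) w)) + (\<Sum>i\<le>?n. pa (coeff Q i) ((\<phi> ^^ i) w))"
    by (simp add: pact_add sum.distrib)
  also have "\<dots> = evb P w + evb Q w"
    using E_bound[of P ?n w] E_bound[of Q ?n w] by simp
  finally show ?thesis .
qed

lemma E_diff: "evb (P - Q) w = evb P w - evb Q w"
proof -
  let ?n = "max (degree P) (degree Q)"
  have "evb (P - Q) w = (\<Sum>i\<le>?n. pa (coeff (P - Q) i) ((\<phi> ^^ i) w))"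
    by (rule E_bound) (simp add: degree_diff_le)
  also have "\<dots> = (\<Sum>i\<le>?n. pa (coeff P i) ((\<phi> ^^ i) w)) - (\<Sum>i\<le>?n. pa (coeff Q i) ((\<phi> ^^ i) w))"
    by (simp add: pact_diff sum_subtractf)
  also have "\<dots> = evb P w - evb Q w"
    using E_bound[of P ?n w] E_bound[of Q ?n w] by simp
  finally show ?thesis .
qed

lemma E_lin: "lin (evb P)"
proof -
  have l: "lin (\<lambda>w. pa (coeff P i) ((\<phi> ^^ i) w))" for i
    using lin_comp[OF pa_lin lin_funpow[OF linphi]] by (simp add: comp_def)
  have a: "pa (coeff P i) ((\<phi> ^^ i) (x + y)) = pa (coeff P i) ((\<phi> ^^ i) x) + pa (coeff P i) ((\<phi> ^^ i) y)"
    for i x y using linD(1)[OF l[of i]] by simp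
  have b: "pa (coeff P i) ((\<phi> ^^ i) (s c x)) = s c (pa (coeff P i) ((\<phi> ^^ i) x))"
    for i c x using linD(2)[OF l[of i]] by simp
  show ?thesis unfolding lin_def evb_def
    by (simp add: a b sum.distrib scale_sum_right)
qed

lemma phi_pa: "\<phi> (pa c x) = pa c (\<phi> x)"
  by (rule pact_commute[OF linL0 linphi phiL0])

lemma E_phi: "\<phi> (evb P w) = evb P (\<phi> w)"
  unfolding evb_def by (simp add: lin_sum[OF linphi] phi_pa funpow_swap1)

lemma E_smult: "evb (smult a Q) w = pa a (evb Q w)"
proof -
  have "evb (smult a Q) w = (\<Sum>i\<le>degree Q. pa (coeff (smult a Q) i) ((\<phi> ^^ i) w))"
    by (rule E_bound) simp
  thus ?thesis unfolding evb_def by (simp add: lin_sum[OF pa_lin] pa_mult)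
qed

lemma E_mult: "evb (P * Q) w = evb P (evb Q w)"
proof (induction P arbitrary: w)
  case 0 thus ?case by simp
next
  case (pCons a P)
  have "evb (pCons a P * Q) w = pa a (evb Q w) + evb (pCons 0 (P * Q)) w"
    by (simp add: E_add E_smult)
  also have "evb (pCons 0 (P * Q)) w = evb P (evb Q (\<phi> w))"
    using pCons by (simp add: E_pCons pa_zero_vec)
  finally show ?case by (simp add: E_pCons E_phi)
qed

lemma L0_evb: "L0 (evb P w) = evb P (L0 w)"
proof -
  have "L0 (pa c x) = pa c (L0 x)" for c x by (rule pact_commute[OF linL0 linL0]) simp
  thus ?thesis unfolding evb_def
    by (simp add: lin_sum[OF linL0] funpow_commute[of L0 \<phi>, OF phiL0[symmetric]])
qed

lemma E_ra: "evb P (ra r w) = ra r (evb P w)"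
  by (rule ra_commute[OF E_lin L0_evb[symmetric]])

lemma E_monom: "evb (monom c k) w = pa c ((\<phi> ^^ k) w)"
proof -
  have "evb (monom c k) w = (\<Sum>i\<le>k. pa (coeff (monom c k) i) ((\<phi> ^^ i) w))"
    by (rule E_bound) (simp add: degree_monom_le)
  also have "\<dots> = (\<Sum>i\<le>k. if i = k then pa c ((\<phi> ^^ i) w) else 0)"
    by (intro sum.cong) auto
  finally show ?thesis by simp
qed

lemma E_sum: "evb (\<Sum>k\<in>S. f k) w = (\<Sum>k\<in>S. evb (f k) w)"
proof (cases "finite S")
  case True thus ?thesis by (induction S rule: finite_induct) (auto simp: E_add)
qed simp

end

context rphi
begin

lemma annih_b: "\<exists>P. P \<noteq> 0 \<and> evb P b = 0"
proof -
  obtain n where n: "\<And>g :: nat \<Rightarrow> 'v. \<exists>c. (\<exists>k\<le>n. c k \<noteq> 0) \<and> (\<Sum>k\<le>n. pa (c k) (g k)) = 0"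
    using FD by blast
  from n[of "\<lambda>k. (\<phi> ^^ k) b"] obtain c k0 where c: "k0 \<le> n" "c k0 \<noteq> 0"
    "(\<Sum>k\<le>n. pa (c k) ((\<phi> ^^ k) b)) = 0" by blast
  define P where "P = (\<Sum>k\<le>n. monom (c k) k)"
  have "evb P b = 0" unfolding P_def using c(3) by (simp add: E_sum E_monom)
  moreover have "coeff P k0 = c k0" unfolding P_def coeff_sum using c(1)
    by (simp add: sum.delta)
  hence "P \<noteq> 0" using c(2) by auto
  ultimately show ?thesis by blast
qed

lemma annih_set: "finite S \<Longrightarrow> \<exists>P. P \<noteq> 0 \<and> (\<forall>b\<in>S. evb P b = 0)"
proof (induction S rule: finite_induct)
  case empty thus ?case by (intro exI[of _ 1]) simp
next
  case (insert b S)
  obtain PS where PS: "PS \<noteq> 0" "\<forall>b\<in>S. evb PS b = 0" using insert.IH by blast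
  obtain Pb where Pb: "Pb \<noteq> 0" "evb Pb b = 0" using annih_b by blast
  have "evb (Pb * PS) b' = 0" if "b' \<in> insert b S" for b'
  proof (cases "b' = b")
    case True
    have "evb (Pb * PS) b' = evb (PS * Pb) b'" by (simp add: mult.commute)
    also have "\<dots> = 0" using True Pb(2) by (simp add: E_mult lin_zero[OF E_lin])
    finally show ?thesis .
  next
    case False
    thus ?thesis using that PS(2) by (simp add: E_mult lin_zero[OF E_lin])
  qed
  thus ?case using PS(1) Pb(1) by (intro exI[of _ "Pb * PS"]) auto
qed

lemma annih: "\<exists>P. P \<noteq> 0 \<and> (\<forall>w. evb P w = 0)"
proof -
  obtain B where B: "finite B" "\<And>v. \<exists>c. v = (\<Sum>b\<in>B. ra (c b) b)"
    using rm unfolding rational_module_def by auto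
  obtain P where P: "P \<noteq> 0" "\<forall>b\<in>B. evb P b = 0" using annih_set[OF B(1)] by blast
  have "evb P w = 0" for w
  proof -
    obtain c where "w = (\<Sum>b\<in>B. ra (c b) b)" using B(2) by blast
    hence "evb P w = (\<Sum>b\<in>B. ra (c b) (evb P b))" by (simp add: lin_sum[OF E_lin] E_ra)
    thus ?thesis using P(2) by simp
  qed
  thus ?thesis using P(1) by blast
qed

definition sh :: "complex poly poly \<Rightarrow> complex poly poly" where
  "sh P = map_poly (\<lambda>c. c \<circ>\<^sub>p [:1, 1:]) P"

lemma coeff_sh: "coeff (sh P) i = coeff P i \<circ>\<^sub>p [:1, 1:]"
  unfolding sh_def by (simp add: coeff_map_poly)

lemma degree_sh: "degree (sh P) \<le> degree P"
  unfolding sh_def by (rule map_poly_degree_leq)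

lemma Lm_sh: "Lm (evb (sh P) w) = evb P (Lm w)"
proof -
  have "evb (sh P) w = (\<Sum>i\<le>degree P. pa (coeff (sh P) i) ((\<phi> ^^ i) w))"
    by (rule E_bound[OF degree_sh])
  hence "Lm (evb (sh P) w) = (\<Sum>i\<le>degree P. pa (coeff P i) (Lm ((\<phi> ^^ i) w)))"
    by (simp add: lin_sum[OF linLm] coeff_sh Lm_pa')
  also have "\<dots> = evb P (Lm w)"
    unfolding evb_def by (simp add: funpow_commute[of Lm \<phi>, OF phiLm[symmetric]])
  finally show ?thesis .
qed

lemma sh_annih: "(\<forall>w. evb P w = 0) \<Longrightarrow> evb (sh P) w = 0"
  using Lm_sh[of P w] Lm_inj by simp

definition mc :: "complex poly \<Rightarrow> nat" where
  "mc c = (if c = 0 then 0 else Suc (degree c))"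

definition mm :: "complex poly poly \<Rightarrow> nat" where
  "mm P = (\<Sum>i\<le>degree P. mc (coeff P i))"

lemma mm_bound: "degree P \<le> n \<Longrightarrow> mm P = (\<Sum>i\<le>n. mc (coeff P i))"
  unfolding mm_def
  by (rule sum.mono_neutral_right[symmetric]) (auto simp: coeff_eq_0 not_le mc_def)

lemma mc_le: "mc (c \<circ>\<^sub>p [:1, 1:] - c) \<le> mc c"
  and mc_lt: "degree c > 0 \<Longrightarrow> mc (c \<circ>\<^sub>p [:1, 1:] - c) < mc c"
proof -
  have "mc (c \<circ>\<^sub>p [:1, 1:] - c) < mc c" if "degree c > 0"
  proof -
    have "c \<noteq> 0" using that by auto
    thus ?thesis using delta_deg[OF that] by (auto simp: mc_def)
  qed
  moreover have "mc (c \<circ>\<^sub>p [:1, 1:] - c) = 0" if dc: "degree c = 0"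
  proof -
    obtain a where "c = [:a:]" using degree0_coeffs[OF dc] by blast
    thus ?thesis by (simp add: mc_def)
  qed
  ultimately show "mc (c \<circ>\<^sub>p [:1, 1:] - c) \<le> mc c" "degree c > 0 \<Longrightarrow> mc (c \<circ>\<^sub>p [:1, 1:] - c) < mc c"
    by (metis le0 less_imp_le neq0_conv)+
qed

lemma reduce:
  "P \<noteq> 0 \<Longrightarrow> (\<forall>w. evb P w = 0) \<Longrightarrow> \<exists>g. g \<noteq> 0 \<and> (\<forall>w. pact s \<phi> g w = 0)"
proof (induction "mm P" arbitrary: P rule: less_induct)
  case less
  show ?case
  proof (cases "\<forall>i. degree (coeff P i) = 0")
    case True
    define g where "g = map_poly (\<lambda>c. coeff c 0) P"
    have cg: "coeff g i = coeff (coeff P i) 0" for i unfolding g_def by (simp add: coeff_map_poly)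
    have cP: "coeff P i = [:coeff g i:]" for i using degree_0_id[OF True[rule_format, of i]] cg by simp
    have "coeff P (degree P) \<noteq> 0" using less.prems(1) by simp
    hence "g \<noteq> 0" using cP[of "degree P"] by auto
    moreover have "pact s \<phi> g w = 0" for w
    proof -
      have "pact s \<phi> g w = (\<Sum>i\<le>degree P. s (coeff g i) ((\<phi> ^^ i) w))"
        by (rule pact_bound) (simp add: g_def map_poly_degree_leq)
      also have "\<dots> = evb P w" unfolding evb_def
        by (intro sum.cong refl) (metis cP pact_const)
      finally show ?thesis using less.prems(2) by simp
    qed
    ultimately show ?thesis by blast
  next
    case False
    then obtain i0 where i0: "degree (coeff P i0) > 0" by auto
    define Q where "Q = sh P - P"
    have cQ: "coeff Q i = coeff P i \<circ>\<^sub>p [:1, 1:] - coeff P i" for i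
      unfolding Q_def by (simp add: coeff_sh)
    have EQ: "\<forall>w. evb Q w = 0" using less.prems(2) sh_annih unfolding Q_def by (simp add: E_diff)
    show ?thesis
    proof (cases "Q = 0")
      case True
      hence "coeff P i0 \<circ>\<^sub>p [:1, 1:] = coeff P i0" using cQ[of i0] by simp
      hence "degree (coeff P i0) = 0" by (rule periodic_const)
      thus ?thesis using i0 by simp
    next
      case False
      have dQ: "degree Q \<le> degree P" unfolding Q_def
        using degree_diff_le[OF degree_sh order.refl] by simp
      have "coeff P i0 \<noteq> 0" using i0 by auto
      hence i0P: "i0 \<le> degree P" by (rule le_degree)
      have "mm Q = (\<Sum>i\<le>degree P. mc (coeff Q i))" by (rule mm_bound[OF dQ])
      also have "\<dots> < (\<Sum>i\<le>degree P. mc (coeff P i))"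
        by (rule sum_strict_mono_ex1) (use i0P mc_le mc_lt[OF i0] in \<open>auto simp: cQ\<close>)
      also have "\<dots> = mm P" unfolding mm_def ..
      finally have "mm Q < mm P" .
      from less.hyps[OF this False EQ] show ?thesis .
    qed
  qed
qed

lemma eigen:
  "g \<noteq> 0 \<Longrightarrow> (\<forall>w. pact s \<phi> g w = 0) \<Longrightarrow> \<exists>l w. w \<noteq> 0 \<and> \<phi> w = s l w"
proof (induction "degree g" arbitrary: g rule: less_induct)
  case less
  show ?case
  proof (cases "degree g = 0")
    case True
    then obtain a where a: "g = [:a:]" using degree0_coeffs by blast
    hence "a \<noteq> 0" using less.prems(1) by simp
    obtain v :: 'v where v: "v \<noteq> 0" using rsimp unfolding R_simple_def by auto
    have "s a v = 0" using spec[OF less.prems(2), of v] a by (simp only: pact_const)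
    hence "s (inverse a) (s a v) = 0" by simp
    hence "v = 0" using \<open>a \<noteq> 0\<close> by simp
    thus ?thesis using v by simp
  next
    case False
    hence "\<not> constant (poly g)" by (simp add: constant_degree)
    then obtain l where "poly g l = 0" using fundamental_theorem_of_algebra by blast
    then obtain h where h: "g = [:-l, 1:] * h" by (metis poly_eq_0_iff_dvd dvdE)
    have hnz: "h \<noteq> 0" using h less.prems(1) by auto
    have "degree g = degree [:-l, 1:] + degree h" unfolding h
      by (rule degree_mult_eq) (auto simp: hnz)
    hence dh: "degree h < degree g" by simp
    have act: "pact s \<phi> g w = \<phi> (pact s \<phi> h w) - s l (pact s \<phi> h w)" for w
      using h by (simp add: pact_diff pact_smult pact_pCons[OF linphi])
    show ?thesis
    proof (cases "\<exists>u. u \<noteq> 0 \<and> \<phi> u = s l u")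
      case True thus ?thesis by blast
    next
      case False
      hence "\<forall>w. pact s \<phi> h w = 0" using less.prems(2) act by (metis eq_iff_diff_eq_0)
      from less.hyps[OF dh hnz this] show ?thesis .
    qed
  qed
qed

lemma phi_scalar: "\<exists>c. \<phi> = s c"
proof -
  obtain P where "P \<noteq> 0" "\<forall>w. evb P w = 0" using annih by blast
  then obtain g where "g \<noteq> 0" "\<forall>w. pact s \<phi> g w = 0" using reduce by blast
  then obtain l w0 where w0: "w0 \<noteq> 0" "\<phi> w0 = s l w0" using eigen by blast
  define K where "K = {w. \<phi> w = s l w}"
  define \<psi> where "\<psi> x = \<phi> x - s l x" for x
  have lpsi: "lin \<psi>" unfolding \<psi>_def by (rule lin_sub[OF linphi lin_scale])
  have psiL0: "\<psi> (L0 x) = L0 (\<psi> x)" for x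
    unfolding \<psi>_def by (simp add: phiL0 lin_diff[OF linL0] linD(2)[OF linL0])
  have K_psi: "w \<in> K \<longleftrightarrow> \<psi> w = 0" for w unfolding K_def \<psi>_def by simp
  have "rational_submodule s Lm L0 Lp K"
    unfolding rational_submodule_def
  proof (intro conjI ballI allI)
    show "0 \<in> K" unfolding K_psi by (rule lin_zero[OF lpsi])
  next
    fix u w assume "u \<in> K" "w \<in> K" thus "u + w \<in> K" unfolding K_psi by (simp add: linD(1)[OF lpsi])
  next
    fix c u assume "u \<in> K" thus "s c u \<in> K" unfolding K_psi by (simp add: linD(2)[OF lpsi])
  next
    fix r u assume "u \<in> K" thus "ra r u \<in> K" unfolding K_psi
      by (simp add: ra_commute[OF lpsi psiL0])
  next
    fix u assume "u \<in> K" thus "Lm u \<in> K" unfolding K_def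
      by (simp add: phiLm linD(2)[OF linLm])
  next
    fix u assume "u \<in> K" thus "L0 u \<in> K" unfolding K_def
      by (simp add: phiL0 linD(2)[OF linL0])
  next
    fix u assume "u \<in> K" thus "Lp u \<in> K" unfolding K_def
      by (simp add: phiLp linD(2)[OF linLp])
  qed
  hence "K = {0} \<or> K = UNIV" using rsimp unfolding R_simple_def by blast
  moreover have "w0 \<in> K" using w0 unfolding K_def by simp
  ultimately have "K = UNIV" using w0 by auto
  hence "\<phi> = s l" unfolding K_def by auto
  thus ?thesis by blast
qed

end

theorem proposition6p17:
  fixes s :: "complex \<Rightarrow> 'v::ab_group_add \<Rightarrow> 'v"
    and Lm L0 Lp :: "'v \<Rightarrow> 'v"
  assumes "rational_module s Lm L0 Lp"
    and "R_simple s Lm L0 Lp"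
  shows "sl2_End s Lm L0 Lp = {(\<lambda>v. s c v) | c. True}"
proof -
  interpret rsl2 s Lm L0 Lp using assms by (rule rsl2.intro)
  show ?thesis
  proof (intro set_eqI iffI)
    fix \<phi> assume ph: "\<phi> \<in> sl2_End s Lm L0 Lp"
    interpret rphi s Lm L0 Lp \<phi>
      using rsl2_axioms ph by (simp add: rphi_def rphi_axioms_def)
    obtain c where "\<phi> = s c" using phi_scalar by blast
    thus "\<phi> \<in> {(\<lambda>v. s c v) | c. True}" by auto
  next
    fix \<phi> assume "\<phi> \<in> {(\<lambda>v. s c v) | c. True}"
    then obtain c where c: "\<phi> = s c" by auto
    show "\<phi> \<in> sl2_End s Lm L0 Lp"
      unfolding sl2_End_def c using lin_scale[of c] lin_linear
      by (simp add: linD(2)[OF linLm] linD(2)[OF linL0] linD(2)[OF linLp])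
  qed
qed

end
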